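(* Let $(M,s)$ be an $\mathbf{S5}$-state such that every world $u\in M[S]$ is reachable from $s$, let $i$ be an agent and $\psi$ a fluent formula. Then $(M,s)\models\mathbf C(\mathbf B_i\psi\vee\mathbf B_i\neg\psi)$ iff for all $u,v\in M[S]$ with $(u,v)\in M[i]$ we have: $M[\pi](u)\models\psi$ iff $M[\pi](v)\models\psi$.
   Context: Agents $\mathcal{AG}=\{1,\dots,n\}$, fluents $\mathcal F$. Belief formulae are built from propositional (fluent) formulae over $\mathcal F$ with $\mathbf B_i$, Boolean connectives, $\mathbf E_\alpha,\mathbf C_\alpha$; $\mathbf C=\mathbf C_{\mathcal{AG}}$. Kripke structures $M$: worlds $M[S]$, interpretations $M[\pi](u)\subseteq\mathcal F$, relations $M[i]$; standard semantics ($\mathbf B_i\varphi$: $\varphi$ at all $M[i]$-successors; $\mathbf E_\alpha\varphi$: all $\mathbf B_i\varphi$, $i\in\alpha$; $\mathbf C_\alpha\varphi$: $\mathbf E_\alpha^k\varphi$ for all $k\ge0$). $(M,s)$ is an $\mathbf{S5}$-state if each $M[i]$ is an equivalence relation. $v$ is reachable from $u$ if connected to it by a finite (possibly empty) chain of pairs each in some $M[j]$. *)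

theory Defs
  imports Main
begin

datatype 'f fform =
    FAtom 'f
  | FTrue
  | FNot "'f fform"
  | FAnd "'f fform" "'f fform"
  | FOr "'f fform" "'f fform"

primrec fsat :: "'f set \<Rightarrow> 'f fform \<Rightarrow> bool" where
  "fsat I (FAtom p) = (p \<in> I)"
| "fsat I FTrue = True"
| "fsat I (FNot \<phi>) = (\<not> fsat I \<phi>)"
| "fsat I (FAnd \<phi> \<psi>) = (fsat I \<phi> \<and> fsat I \<psi>)"
| "fsat I (FOr \<phi> \<psi>) = (fsat I \<phi> \<or> fsat I \<psi>)"

datatype 'f bform =
    BFl "'f fform"
  | BB nat "'f bform"
  | BNot "'f bform"
  | BAnd "'f bform" "'f bform"
  | BOr "'f bform" "'f bform"
  | BE "nat set" "'f bform"
  | BC "nat set" "'f bform"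

record ('w, 'f) kripke =
  worlds :: "'w set"
  interp :: "'w \<Rightarrow> 'f set"
  rel :: "nat \<Rightarrow> ('w \<times> 'w) set"

text \<open>E^k_\<alpha> is expressed via the k-step reachability
  relation of the union of the relations of agents in \<alpha>: (M,u) |= E^k \<phi>
  iff \<phi> holds at all worlds reached by exactly k steps.\<close>
fun Ek_succ :: "('w, 'f) kripke \<Rightarrow> nat set \<Rightarrow> nat \<Rightarrow> 'w \<Rightarrow> 'w set" where
  "Ek_succ M \<alpha> 0 u = {u}"
| "Ek_succ M \<alpha> (Suc k) u = {w. \<exists>v \<in> Ek_succ M \<alpha> k u. \<exists>i\<in>\<alpha>. (v, w) \<in> rel M i}"

fun sat :: "('w, 'f) kripke \<Rightarrow> 'w \<Rightarrow> 'f bform \<Rightarrow> bool" where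
  "sat M u (BFl \<phi>) = fsat (interp M u) \<phi>"
| "sat M u (BB i \<phi>) = (\<forall>v. (u, v) \<in> rel M i \<longrightarrow> sat M v \<phi>)"
| "sat M u (BNot \<phi>) = (\<not> sat M u \<phi>)"
| "sat M u (BAnd \<phi> \<psi>) = (sat M u \<phi> \<and> sat M u \<psi>)"
| "sat M u (BOr \<phi> \<psi>) = (sat M u \<phi> \<or> sat M u \<psi>)"
| "sat M u (BE \<alpha> \<phi>) = (\<forall>i\<in>\<alpha>. \<forall>v. (u, v) \<in> rel M i \<longrightarrow> sat M v \<phi>)"
| "sat M u (BC \<alpha> \<phi>) = (\<forall>k. \<forall>v \<in> Ek_succ M \<alpha> k u. sat M v \<phi>)"

definition agents :: "nat \<Rightarrow> nat set" where
  "agents n = {1..n}"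

definition S5_state :: "nat \<Rightarrow> ('w, 'f) kripke \<Rightarrow> 'w \<Rightarrow> bool" where
  "S5_state n M s \<longleftrightarrow> s \<in> worlds M \<and>
     (\<forall>i \<in> agents n. equiv (worlds M) (rel M i))"

definition reachable :: "nat \<Rightarrow> ('w, 'f) kripke \<Rightarrow> 'w \<Rightarrow> 'w \<Rightarrow> bool" where
  "reachable n M u v \<longleftrightarrow> (u, v) \<in> (\<Union>j \<in> agents n. rel M j)\<^sup>*"

end

theory Submission
  imports Defs
begin

lemma Ek_worlds:
  assumes "S5_state n M s" "u \<in> worlds M"
  shows "w \<in> Ek_succ M (agents n) k u \<Longrightarrow> w \<in> worlds M"
proof (induction k arbitrary: w)
  case 0 then show ?case using assms by simp
next
  case (Suc k)
  then obtain v j where "v \<in> Ek_succ M (agents n) k u" "j \<in> agents n" "(v, w) \<in> rel M j" by auto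
  moreover have "equiv (worlds M) (rel M j)" using assms(1) \<open>j \<in> agents n\<close> unfolding S5_state_def by blast
  ultimately show ?case using equiv_type[of "worlds M" "rel M j"] by blast
qed

lemma reach_Ek:
  assumes "(s, u) \<in> (\<Union>j \<in> agents n. rel M j)\<^sup>*"
  shows "\<exists>k. u \<in> Ek_succ M (agents n) k s"
  using assms
proof (induction rule: rtrancl_induct)
  case base
  have "s \<in> Ek_succ M (agents n) 0 s" by simp
  then show ?case by blast
next
  case (step y z)
  then obtain k where "y \<in> Ek_succ M (agents n) k s" by blast
  with step(2) have "z \<in> Ek_succ M (agents n) (Suc k) s" by auto
  then show ?case by blast
qed

theorem lemma9:
  fixes n :: nat and M :: "('w, 'f) kripke" and s :: 'w and i :: nat and \<psi> :: "'f fform"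
  assumes "S5_state n M s"
    and "\<forall>u \<in> worlds M. reachable n M s u"
    and "i \<in> agents n"
  shows "sat M s (BC (agents n) (BOr (BB i (BFl \<psi>)) (BB i (BFl (FNot \<psi>)))))
     \<longleftrightarrow> (\<forall>u \<in> worlds M. \<forall>v \<in> worlds M. (u, v) \<in> rel M i \<longrightarrow>
            (fsat (interp M u) \<psi> \<longleftrightarrow> fsat (interp M v) \<psi>))"
proof -
  have eq: "equiv (worlds M) (rel M i)" using assms(1,3) unfolding S5_state_def by blast
  have sw: "s \<in> worlds M" using assms(1) unfolding S5_state_def by blast
  show ?thesis
  proof
    assume C: "sat M s (BC (agents n) (BOr (BB i (BFl \<psi>)) (BB i (BFl (FNot \<psi>)))))"
    show "\<forall>u \<in> worlds M. \<forall>v \<in> worlds M. (u, v) \<in> rel M i \<longrightarrow>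
            (fsat (interp M u) \<psi> \<longleftrightarrow> fsat (interp M v) \<psi>)"
    proof (intro ballI impI)
      fix u v assume u: "u \<in> worlds M" and "v \<in> worlds M" and uv: "(u, v) \<in> rel M i"
      have "reachable n M s u" using assms(2) u by simp
      then obtain k where "u \<in> Ek_succ M (agents n) k s"
        unfolding reachable_def by (metis reach_Ek)
      with C have h: "sat M u (BOr (BB i (BFl \<psi>)) (BB i (BFl (FNot \<psi>))))"
        using C by (simp only: sat.simps)
      then have h: "(\<forall>v. (u, v) \<in> rel M i \<longrightarrow> fsat (interp M v) \<psi>) \<or>
                 (\<forall>v. (u, v) \<in> rel M i \<longrightarrow> \<not> fsat (interp M v) \<psi>)" by simp
      have uu: "(u, u) \<in> rel M i" using eq u by (simp add: equiv_def refl_on_def)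
      from h uu uv show "fsat (interp M u) \<psi> \<longleftrightarrow> fsat (interp M v) \<psi>" by blast
    qed
  next
    assume R: "\<forall>u \<in> worlds M. \<forall>v \<in> worlds M. (u, v) \<in> rel M i \<longrightarrow>
            (fsat (interp M u) \<psi> \<longleftrightarrow> fsat (interp M v) \<psi>)"
    show "sat M s (BC (agents n) (BOr (BB i (BFl \<psi>)) (BB i (BFl (FNot \<psi>)))))"
    proof (simp only: sat.simps, intro allI ballI)
      fix k w assume "w \<in> Ek_succ M (agents n) k s"
      then have w: "w \<in> worlds M" using Ek_worlds[OF assms(1) sw] by blast
      have "\<forall>v. (w, v) \<in> rel M i \<longrightarrow> (fsat (interp M w) \<psi> \<longleftrightarrow> fsat (interp M v) \<psi>)"
      proof (intro allI impI)
        fix v assume "(w, v) \<in> rel M i"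
        moreover then have "v \<in> worlds M" using equiv_type[OF eq] by blast
        ultimately show "fsat (interp M w) \<psi> \<longleftrightarrow> fsat (interp M v) \<psi>" using R w by simp
      qed
      then show "(\<forall>v. (w, v) \<in> rel M i \<longrightarrow> fsat (interp M v) \<psi>) \<or>
                 (\<forall>v. (w, v) \<in> rel M i \<longrightarrow> fsat (interp M v) (FNot \<psi>))"
        by (cases "fsat (interp M w) \<psi>") simp_all
    qed
  qed
qed

end
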